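(* Let $(A,\leq,\cdot,/)$ be a right-residuated magma satisfying condition (N). For $a\in A$ let $(a]=\{x\in A\mid x\leq a\}$. Then: (1) each $(a]$ is closed under $\sqcap$; (2) the following are equivalent: (a) $A$ is a narhoop; (b) for every $a\in A$, $\sqcap$ is commutative on $(a]$; (c) for every $a\in A$, $\sqcap$ is associative on $(a]$.
   Context: Write $xy$ for $x\cdot y$; $\cdot$ binds more strongly than $/$, and $/$ binds more strongly than $\sqcap$, where $x\sqcap y := (x/y)y$. A right-residuated magma is a structure $(A,\leq,\cdot,/)$ where $(A,\leq)$ is a poset and $xy\leq z\iff x\leq z/y$ for all $x,y,z\in A$. Condition (N): for all $x,y\in A$, $x\leq y\iff x = y\sqcap x$. A narhoop is a right-residuated magma such that for all $x,y$: $x\leq y\iff x\sqcap y = x = y\sqcap x$; equivalently, a right-residuated magma satisfying (N) and the identity $(x\sqcap y)\sqcap x = x\sqcap y$. *)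

theory Defs
  imports Main
begin

text \<open>A right-residuated magma on a poset (type 'a with partial order),
 with multiplication m and right residual r (r x y stands for x / y).\<close>

definition right_residuated_magma :: "('a::order \<Rightarrow> 'a \<Rightarrow> 'a) \<Rightarrow> ('a \<Rightarrow> 'a \<Rightarrow> 'a) \<Rightarrow> bool" where
  "right_residuated_magma m r \<longleftrightarrow> (\<forall>x y z. m x y \<le> z \<longleftrightarrow> x \<le> r z y)"

definition meetop :: "('a \<Rightarrow> 'a \<Rightarrow> 'a) \<Rightarrow> ('a \<Rightarrow> 'a \<Rightarrow> 'a) \<Rightarrow> 'a \<Rightarrow> 'a \<Rightarrow> 'a" where
  "meetop m r x y = m (r x y) y"

definition condN :: "('a::order \<Rightarrow> 'a \<Rightarrow> 'a) \<Rightarrow> ('a \<Rightarrow> 'a \<Rightarrow> 'a) \<Rightarrow> bool" where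
  "condN m r \<longleftrightarrow> (\<forall>x y. x \<le> y \<longleftrightarrow> x = meetop m r y x)"

definition narhoop :: "('a::order \<Rightarrow> 'a \<Rightarrow> 'a) \<Rightarrow> ('a \<Rightarrow> 'a \<Rightarrow> 'a) \<Rightarrow> bool" where
  "narhoop m r \<longleftrightarrow> right_residuated_magma m r \<and>
     (\<forall>x y. x \<le> y \<longleftrightarrow> (meetop m r x y = x \<and> x = meetop m r y x))"

end

theory Submission
  imports Defs
begin

context
  fixes m r :: "'a::order \<Rightarrow> 'a \<Rightarrow> 'a"
  assumes R: "right_residuated_magma m r" and N: "condN m r"
begin

lemma L1: "meetop m r x y \<le> x"
  using R unfolding right_residuated_magma_def meetop_def by blast

lemma L2: "x \<le> x' \<Longrightarrow> m x y \<le> m x' y"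
  using R unfolding right_residuated_magma_def by (meson order_trans order_refl)

lemma L3: "x \<le> x' \<Longrightarrow> r x y \<le> r x' y"
  using R unfolding right_residuated_magma_def by (meson order_trans order_refl)

lemma L4: "x \<le> y \<Longrightarrow> meetop m r y x = x"
  using N unfolding condN_def by metis

lemma L4': "meetop m r y x = x \<Longrightarrow> x \<le> y"
  using N unfolding condN_def by metis

lemma narH: "narhoop m r \<longleftrightarrow> (\<forall>x y. x \<le> y \<longrightarrow> meetop m r x y = x)"
  using R L4 L4' unfolding narhoop_def by metis

lemma H_le: assumes H: "\<forall>x y. x \<le> y \<longrightarrow> meetop m r x y = x"
  and "x \<le> a" "y \<le> a" shows "meetop m r x y \<le> y"
proof -
  have "meetop m r x y \<le> meetop m r a y"
    unfolding meetop_def by (rule L2, rule L3, fact)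
  also have "\<dots> = y" using L4 assms(3) by blast
  finally show ?thesis .
qed

lemma H_glb: assumes H: "\<forall>x y. x \<le> y \<longrightarrow> meetop m r x y = x"
  and "w \<le> x" "w \<le> y" shows "w \<le> meetop m r x y"
proof -
  have "w = meetop m r w y" using H assms by simp
  also have "\<dots> \<le> meetop m r x y"
    unfolding meetop_def by (rule L2, rule L3, fact)
  finally show ?thesis .
qed

lemma H_comm: assumes H: "\<forall>x y. x \<le> y \<longrightarrow> meetop m r x y = x"
  and "x \<le> a" "y \<le> a" shows "meetop m r x y = meetop m r y x"
proof (rule antisym)
  show "meetop m r x y \<le> meetop m r y x"
    by (rule H_glb[OF H], rule H_le[OF H assms(2,3)], rule L1)
  show "meetop m r y x \<le> meetop m r x y"
    by (rule H_glb[OF H], rule H_le[OF H assms(3,2)], rule L1)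
qed

lemma comm_H: assumes C: "\<forall>a. \<forall>x\<in>{..a}. \<forall>y\<in>{..a}. meetop m r x y = meetop m r y x"
  shows "\<forall>x y. x \<le> y \<longrightarrow> meetop m r x y = x"
  using C L4 by (metis atMost_iff order_refl)

lemma assoc_H: assumes A: "\<forall>a. \<forall>x\<in>{..a}. \<forall>y\<in>{..a}. \<forall>z\<in>{..a}. meetop m r (meetop m r x y) z = meetop m r x (meetop m r y z)"
  shows "\<forall>x y. x \<le> y \<longrightarrow> meetop m r x y = x"
proof (intro allI impI)
  fix x y :: 'a assume xy: "x \<le> y"
  have yx: "meetop m r y x = x" using L4 xy by blast
  have xx: "meetop m r x x = x" using L4 by blast
  have "meetop m r (meetop m r x y) x = meetop m r x (meetop m r y x)"
    using A xy by auto
  hence "meetop m r (meetop m r x y) x = x" using yx xx by simp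
  hence "x \<le> meetop m r x y" using L1 by metis
  thus "meetop m r x y = x" using L1 antisym by blast
qed

lemma H_assoc: assumes H: "\<forall>x y. x \<le> y \<longrightarrow> meetop m r x y = x"
  and a: "x \<le> a" "y \<le> a" "z \<le> a"
  shows "meetop m r (meetop m r x y) z = meetop m r x (meetop m r y z)"
proof -
  have xy: "meetop m r x y \<le> x" "meetop m r x y \<le> y" using L1 H_le[OF H a(1,2)] by auto
  have yz: "meetop m r y z \<le> y" "meetop m r y z \<le> z" using L1 H_le[OF H a(2,3)] by auto
  have xya: "meetop m r x y \<le> a" using xy a order_trans by blast
  have yza: "meetop m r y z \<le> a" using yz a order_trans by blast
  have l: "meetop m r (meetop m r x y) z \<le> meetop m r x y" "meetop m r (meetop m r x y) z \<le> z"
    using L1 H_le[OF H xya a(3)] by auto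
  have r: "meetop m r x (meetop m r y z) \<le> x" "meetop m r x (meetop m r y z) \<le> meetop m r y z"
    using L1 H_le[OF H a(1) yza] by auto
  show ?thesis
  proof (rule antisym)
    show "meetop m r (meetop m r x y) z \<le> meetop m r x (meetop m r y z)"
      apply (rule H_glb[OF H])
       apply (meson l xy order_trans)
      apply (rule H_glb[OF H]) apply (meson l xy order_trans) apply (rule l(2))
      done
    show "meetop m r x (meetop m r y z) \<le> meetop m r (meetop m r x y) z"
      apply (rule H_glb[OF H])
       apply (rule H_glb[OF H]) apply (rule r(1)) apply (meson r yz order_trans)
      apply (meson r yz order_trans)
      done
  qed
qed

end

theorem mainTheorem5:
  fixes m r :: "'a::order \<Rightarrow> 'a \<Rightarrow> 'a"
  assumes "right_residuated_magma m r" and "condN m r"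
  shows "(\<forall>a. \<forall>x\<in>{..a}. \<forall>y\<in>{..a}. meetop m r x y \<in> {..a})
    \<and> (narhoop m r \<longleftrightarrow> (\<forall>a. \<forall>x\<in>{..a}. \<forall>y\<in>{..a}. meetop m r x y = meetop m r y x))
    \<and> ((\<forall>a. \<forall>x\<in>{..a}. \<forall>y\<in>{..a}. meetop m r x y = meetop m r y x) \<longleftrightarrow>
       (\<forall>a. \<forall>x\<in>{..a}. \<forall>y\<in>{..a}. \<forall>z\<in>{..a}. meetop m r (meetop m r x y) z = meetop m r x (meetop m r y z)))"
proof (intro conjI)
  note A = assms
  show "\<forall>a. \<forall>x\<in>{..a}. \<forall>y\<in>{..a}. meetop m r x y \<in> {..a}"
    using L1[OF A] order_trans by fastforce
  show "narhoop m r \<longleftrightarrow> (\<forall>a. \<forall>x\<in>{..a}. \<forall>y\<in>{..a}. meetop m r x y = meetop m r y x)"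
    using narH[OF A] H_comm[OF A] comm_H[OF A] by (metis atMost_iff)
  show "(\<forall>a. \<forall>x\<in>{..a}. \<forall>y\<in>{..a}. meetop m r x y = meetop m r y x) \<longleftrightarrow>
       (\<forall>a. \<forall>x\<in>{..a}. \<forall>y\<in>{..a}. \<forall>z\<in>{..a}. meetop m r (meetop m r x y) z = meetop m r x (meetop m r y z))"
  proof
    assume C: "\<forall>a. \<forall>x\<in>{..a}. \<forall>y\<in>{..a}. meetop m r x y = meetop m r y x"
    show "\<forall>a. \<forall>x\<in>{..a}. \<forall>y\<in>{..a}. \<forall>z\<in>{..a}. meetop m r (meetop m r x y) z = meetop m r x (meetop m r y z)"
      using H_assoc[OF A comm_H[OF A C]] by simp
  next
    assume C: "\<forall>a. \<forall>x\<in>{..a}. \<forall>y\<in>{..a}. \<forall>z\<in>{..a}. meetop m r (meetop m r x y) z = meetop m r x (meetop m r y z)"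
    show "\<forall>a. \<forall>x\<in>{..a}. \<forall>y\<in>{..a}. meetop m r x y = meetop m r y x"
      using H_comm[OF A assoc_H[OF A C]] by simp
  qed
qed

end
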